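(* Let $c,\rho\in(0,1)$ with $c+\rho>1$. Suppose the conditional gradient algorithm chooses $\theta_k\in[0,1]$ with $\rho\hat\theta_k\le\theta_k\le\hat\theta_k$, where $\hat\theta_k=\max\{\theta\in[0,1]:(1-\theta)\mathrm{gap}(x_k,g_k)+\mathcal D(x_k,s_k,\theta)\le(1-c\theta)\mathrm{gap}(x_k,g_k)\}$. Suppose $q>1$, $r\in[0,1]$ are such that $(\mathcal D,\mathrm{gap},\mathrm{subopt})$ satisfies the $(q,r)$ weak growth property with some finite $M>0$. Then for $k=0,1,\dots$ \[ \mathrm{subopt}_{k+1}\le\mathrm{subopt}_k\Big(1-(c+\rho-1)\min\Big\{1,\Big(\tfrac{q(1-c)}{M}\mathrm{subopt}_k^{1-r}\Big)^{\frac1{q-1}}\Big\}\Big). \] If $r=1$ then $\mathrm{subopt}_k\le\mathrm{subopt}_0\big(1-(c+\rho-1)\min\{1,(q(1-c)/M)^{1/(q-1)}\}\big)^k$. If $r\in[0,1)$ then $\mathrm{subopt}_k\le\mathrm{subopt}_0(1-(c+\rho-1))^k$ for $k=0,\dots,k_0$, where $k_0$ is the smallest $k$ with $\mathrm{subopt}_k^{1-r}\le\frac{M}{q(1-c)}$, and for $k\ge k_0$ \[ \mathrm{subopt}_k\le\Big(\mathrm{subopt}_{k_0}^{\frac{r-1}{q-1}}+\frac{(1-r)(c+\rho-1)}{q-1}\Big(\frac{q(1-c)}{M}\Big)^{\frac1{q-1}}(k-k_0)\Big)^{\frac{q-1}{r-1}}. \]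
   Context: Let $f,\Psi:\mathbb{R}^n\to\mathbb{R}\cup\{\infty\}$ be closed proper convex functions such that (A1) $f$ is differentiable on $\mathrm{dom}(\Psi)$, and (A2) for every $x\in\mathrm{dom}(f)$ the set $\arg\min_s\{\langle\nabla f(x),s\rangle+\Psi(s)\}$ is nonempty. $f^*,\Psi^*$ denote convex conjugates; $\arg\min_y\{\langle g,y\rangle+\Psi(y)\}=\partial\Psi^*(-g)$. $D_f(y,x)=f(y)-f(x)-\langle\nabla f(x),y-x\rangle$. $\mathrm{gap}(x,u)=f(x)+\Psi(x)+f^*(u)+\Psi^*(-u)$. $\mathcal{D}(x,s,\theta)=D_f(x+\theta(s-x),x)+\Psi(x+\theta(s-x))-(1-\theta)\Psi(x)-\theta\Psi(s)$. Suboptimality gap: $\mathrm{subopt}(x)=f(x)+\Psi(x)-\min_y\{f(y)+\Psi(y)\}$ for $x\in\mathrm{dom}(\Psi)$ (the minimum assumed attained/finite). Conditional gradient algorithm: given $x_0\in\mathrm{dom}(\Psi)$, for $k=0,1,2,\dots$ let $g_k=\nabla f(x_k)$, pick $s_k\in\arg\min_y\{\langle g_k,y\rangle+\Psi(y)\}$ and $\theta_k\in[0,1]$, and set $x_{k+1}=(1-\theta_k)x_k+\theta_k s_k$. $\mathrm{subopt}_k=\mathrm{subopt}(x_k)$. $(q,r)$ weak growth property ($q>1$, $r\in[0,1]$): there is a finite $M>0$ such that for all $x\in\mathrm{dom}(\Psi)$, $g=\nabla f(x)$, $s\in\partial\Psi^*(-g)$: $\mathcal D(x,s,\theta)\,\mathrm{subopt}(x)^{1-r}\le\frac{M\theta^q}{q}\mathrm{gap}(x,g)$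 for all $\theta\in[0,1]$. *)

theory Defs
  imports "HOL-Analysis.Analysis"
begin

definition edom :: "('a \<Rightarrow> ereal) \<Rightarrow> 'a set" where
  "edom h = {x. h x < \<infinity>}"

definition proper_fun :: "('a \<Rightarrow> ereal) \<Rightarrow> bool" where
  "proper_fun h \<longleftrightarrow> (\<forall>x. h x \<noteq> -\<infinity>) \<and> (\<exists>x. h x < \<infinity>)"

definition eepi :: "('a \<Rightarrow> ereal) \<Rightarrow> ('a \<times> real) set" where
  "eepi h = {(x, t). h x \<le> ereal t}"

definition closed_proper_convex :: "('a::euclidean_space \<Rightarrow> ereal) \<Rightarrow> bool" where
  "closed_proper_convex h \<longleftrightarrow> proper_fun h \<and> convex (eepi h) \<and> closed (eepi h)"

definition conj_fun :: "('a::euclidean_space \<Rightarrow> ereal) \<Rightarrow> 'a \<Rightarrow> ereal" where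
  "conj_fun h u = (SUP x. ereal (u \<bullet> x) - h x)"

definition subdiff :: "('a::euclidean_space \<Rightarrow> ereal) \<Rightarrow> 'a \<Rightarrow> 'a set" where
  "subdiff h u = {s. \<bar>h u\<bar> \<noteq> \<infinity> \<and> (\<forall>v. h u + ereal (s \<bullet> (v - u)) \<le> h v)}"

definition has_grad :: "('a::euclidean_space \<Rightarrow> ereal) \<Rightarrow> 'a \<Rightarrow> 'a \<Rightarrow> bool" where
  "has_grad f g x \<longleftrightarrow> eventually (\<lambda>y. \<bar>f y\<bar> \<noteq> \<infinity>) (nhds x) \<and>
     ((\<lambda>y. real_of_ereal (f y)) has_derivative (\<lambda>h. g \<bullet> h)) (at x)"

definition is_lin_argmin :: "('a::euclidean_space \<Rightarrow> ereal) \<Rightarrow> 'a \<Rightarrow> 'a \<Rightarrow> bool" where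
  "is_lin_argmin \<Psi> g s \<longleftrightarrow> (\<forall>y. ereal (g \<bullet> s) + \<Psi> s \<le> ereal (g \<bullet> y) + \<Psi> y)"

definition bregman :: "('a::euclidean_space \<Rightarrow> ereal) \<Rightarrow> ('a \<Rightarrow> 'a) \<Rightarrow> 'a \<Rightarrow> 'a \<Rightarrow> ereal" where
  "bregman f gf y x = f y - f x - ereal (gf x \<bullet> (y - x))"

definition gap :: "('a::euclidean_space \<Rightarrow> ereal) \<Rightarrow> ('a \<Rightarrow> ereal) \<Rightarrow> 'a \<Rightarrow> 'a \<Rightarrow> ereal" where
  "gap f \<Psi> x u = f x + \<Psi> x + conj_fun f u + conj_fun \<Psi> (- u)"

definition Dcal :: "('a::euclidean_space \<Rightarrow> ereal) \<Rightarrow> ('a \<Rightarrow> ereal) \<Rightarrow> ('a \<Rightarrow> 'a)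
    \<Rightarrow> 'a \<Rightarrow> 'a \<Rightarrow> real \<Rightarrow> ereal" where
  "Dcal f \<Psi> gf x s \<theta> =
     bregman f gf (x + \<theta> *\<^sub>R (s - x)) x + \<Psi> (x + \<theta> *\<^sub>R (s - x))
       - ereal (1 - \<theta>) * \<Psi> x - ereal \<theta> * \<Psi> s"

text \<open>suboptimality gap (meaningful for x in dom Psi, when the minimum is attained/finite)\<close>
definition subopt :: "('a \<Rightarrow> ereal) \<Rightarrow> ('a \<Rightarrow> ereal) \<Rightarrow> 'a \<Rightarrow> real" where
  "subopt f \<Psi> x = real_of_ereal (f x + \<Psi> x - (INF y. f y + \<Psi> y))"

text \<open>real power a^e with the convention a^0 = 1 (also for a = 0)\<close>
definition rpow :: "real \<Rightarrow> real \<Rightarrow> real" where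
  "rpow a e = (if e = 0 then 1 else a powr e)"

definition weak_growth :: "('a::euclidean_space \<Rightarrow> ereal) \<Rightarrow> ('a \<Rightarrow> ereal) \<Rightarrow> ('a \<Rightarrow> 'a)
    \<Rightarrow> real \<Rightarrow> real \<Rightarrow> real \<Rightarrow> bool" where
  "weak_growth f \<Psi> gf q r M \<longleftrightarrow> M > 0 \<and>
     (\<forall>x \<in> edom \<Psi>. \<forall>s \<in> subdiff (conj_fun \<Psi>) (- gf x). \<forall>\<theta> \<in> {0..1}.
        Dcal f \<Psi> gf x s \<theta> * ereal (rpow (subopt f \<Psi> x) (1 - r))
          \<le> ereal (M * \<theta> powr q / q) * gap f \<Psi> x (gf x))"

definition theta_hat :: "('a::euclidean_space \<Rightarrow> ereal) \<Rightarrow> ('a \<Rightarrow> ereal) \<Rightarrow> ('a \<Rightarrow> 'a)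
    \<Rightarrow> real \<Rightarrow> 'a \<Rightarrow> 'a \<Rightarrow> real" where
  "theta_hat f \<Psi> gf c x s = (GREATEST \<theta>. \<theta> \<in> {0..1} \<and>
      ereal (1 - \<theta>) * gap f \<Psi> x (gf x) + Dcal f \<Psi> gf x s \<theta>
        \<le> ereal (1 - c * \<theta>) * gap f \<Psi> x (gf x))"

end

theory Submission
  imports Defs
begin


lemma bern_powr:
  fixes u p :: real
  assumes "0 \<le> u" "u < 1" "p > 0"
  shows "1 + p * u \<le> (1 - u) powr (-p)"
proof -
  have "ln (1 - u) \<le> - u" using ln_le_minus_one[of "1-u"] assms by simp
  hence "p * u \<le> - p * ln (1 - u)" using mult_left_mono[of "ln(1-u)" "-u" p] assms by simp
  hence "exp (p * u) \<le> exp (- p * ln (1 - u))" by simp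
  moreover have "(1 - u) powr (-p) = exp (- p * ln (1 - u))"
    using assms by (simp add: powr_def)
  moreover have "1 + p * u \<le> exp (p * u)" by simp
  ultimately show ?thesis by linarith
qed

lemma seq_part3:
  fixes a :: "nat \<Rightarrow> real" and \<kappa> K e q :: real
  assumes a0: "\<forall>k. 0 \<le> a k" and \<kappa>: "0 < \<kappa>" "\<kappa> < 1" and K: "K > 0"
    and e: "0 < e" "e \<le> 1" and q: "q > 1"
    and step: "\<forall>k. a (Suc k) \<le> a k * (1 - \<kappa> * min 1 ((K * a k powr e) powr (1/(q-1))))"
  shows "(\<exists>k. a k powr e \<le> 1/K) \<and>
    (let k0 = (LEAST k. a k powr e \<le> 1/K) in
      (\<forall>k\<le>k0. a k \<le> a 0 * (1-\<kappa>)^k) \<and>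
      (\<forall>k\<ge>k0. a k \<le> (a k0 powr (-e/(q-1)) + e*\<kappa>/(q-1) * K powr (1/(q-1)) * real(k-k0))
                    powr (-(q-1)/e)))"
proof -
  define m where "m k = min 1 ((K * a k powr e) powr (1/(q-1)))" for k
  have m0: "0 \<le> m k" "m k \<le> 1" for k unfolding m_def by auto
  have step': "a (Suc k) \<le> a k * (1 - \<kappa> * m k)" for k using step m_def by auto
  have dec1: "a (Suc k) \<le> a k" for k
  proof -
    have "a k * (1 - \<kappa> * m k) \<le> a k * 1"
      using a0 m0[of k] \<kappa> by (intro mult_left_mono) auto
    thus ?thesis using step'[of k] by simp
  qed
  have decj: "a j \<le> a k" if "k \<le> j" for j k
    using that dec1 by (metis decseq_SucI decseqD)
  have m1: "m k = 1" if "\<not> a k powr e \<le> 1/K" for k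
  proof -
    have "1 < K * a k powr e" using that K by (simp add: field_simps)
    hence "1 \<le> (K * a k powr e) powr (1/(q-1))"
      using q by (intro ge_one_powr_ge_zero) auto
    thus ?thesis unfolding m_def by simp
  qed
  have ex: "\<exists>k. a k powr e \<le> 1/K"
  proof (rule ccontr)
    assume H: "\<not> ?thesis"
    have lin: "a k \<le> a 0 * (1-\<kappa>)^k" for k
    proof (induction k)
      case 0 then show ?case by simp
    next
      case (Suc k)
      have "a (Suc k) \<le> a k * (1 - \<kappa>)" using step'[of k] m1[of k] H by auto
      also have "\<dots> \<le> a 0 * (1-\<kappa>)^k * (1 - \<kappa>)"
        using Suc \<kappa> by (intro mult_right_mono) auto
      finally show ?case by (simp add: mult_ac)
    qed
    define L where "L = (1/K) powr (1/e)"
    have L: "L > 0" using K unfolding L_def by simp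
    have "0 < a 0 + 1" using a0 by (metis add_nonneg_pos zero_less_one)
    hence "0 < L / (a 0 + 1)" using L by simp
    then obtain n where n: "(1-\<kappa>)^n < L / (a 0 + 1)"
      using real_arch_pow_inv[of "L / (a 0 + 1)" "1-\<kappa>"] \<kappa> by auto
    have "a n \<le> a 0 * (1-\<kappa>)^n" by (rule lin)
    also have "\<dots> \<le> (a 0 + 1) * (1-\<kappa>)^n" using \<kappa> by (intro mult_right_mono) auto
    also have "\<dots> < L" using n \<open>0 < a 0 + 1\<close> by (simp add: pos_less_divide_eq mult.commute)
    finally have "a n \<le> L" by simp
    hence "a n powr e \<le> L powr e" using a0 e by (intro powr_mono2) auto
    also have "L powr e = 1/K" unfolding L_def using e K by (simp add: powr_powr)
    finally show False using H by auto
  qed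
  define k0 where "k0 = (LEAST k. a k powr e \<le> 1/K)"
  have k0: "a k0 powr e \<le> 1/K" unfolding k0_def using ex by (rule LeastI_ex)
  have part1: "a k \<le> a 0 * (1-\<kappa>)^k" if "k \<le> k0" for k
    using that
  proof (induction k)
    case 0 then show ?case by simp
  next
    case (Suc k)
    have "\<not> a k powr e \<le> 1/K" using Suc.prems not_less_Least[of k "\<lambda>k. a k powr e \<le> 1/K"] unfolding k0_def by auto
    hence "a (Suc k) \<le> a k * (1 - \<kappa>)" using step'[of k] m1[of k] by auto
    also have "\<dots> \<le> a 0 * (1-\<kappa>)^k * (1 - \<kappa>)"
      using Suc \<kappa> by (intro mult_right_mono) auto
    finally show ?case by (simp add: mult_ac)
  qed
  define p where "p = e / (q - 1)"
  define \<beta> where "\<beta> = \<kappa> * K powr (1/(q-1))"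
  have p: "p > 0" unfolding p_def using e q by simp
  have \<beta>: "\<beta> > 0" unfolding \<beta>_def using \<kappa> K by simp
  have coef: "e*\<kappa>/(q-1) * K powr (1/(q-1)) = p * \<beta>" unfolding p_def \<beta>_def by simp
  have mk: "m k = K powr (1/(q-1)) * a k powr p" "K * a k powr e \<le> 1" if "k0 \<le> k" for k
  proof -
    have "a k powr e \<le> a k0 powr e" using decj[OF that] a0 e by (intro powr_mono2) auto
    hence "K * a k powr e \<le> K * a k0 powr e" using K by simp
    also have "K * a k0 powr e \<le> 1" using k0 K by (simp add: field_simps)
    finally have le: "K * a k powr e \<le> 1" .
    thus "K * a k powr e \<le> 1" .
    have "(K * a k powr e) powr (1/(q-1)) \<le> 1"
      using le q K a0 by (intro powr_le1) auto
    hence "m k = (K * a k powr e) powr (1/(q-1))" unfolding m_def by simp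
    also have "\<dots> = K powr (1/(q-1)) * a k powr p"
      using K a0 unfolding p_def by (simp add: powr_mult powr_powr)
    finally show "m k = K powr (1/(q-1)) * a k powr p" .
  qed
  define B where "B k = a k0 powr (-p) + p * \<beta> * real (k - k0)" for k
  have inv: "a k = 0 \<or> (a k > 0 \<and> B k \<le> a k powr (-p))" if "k0 \<le> k" for k
    using that
  proof (induction k rule: dec_induct)
    case base
    then show ?case using a0[rule_format, of k0] unfolding B_def by auto
  next
    case (step n)
    show ?case
    proof (cases "a (Suc n) = 0")
      case True then show ?thesis by simp
    next
      case False
      hence pos1: "a (Suc n) > 0" using a0[rule_format, of "Suc n"] by linarith
      hence posn: "a n > 0" using dec1[of n] by simp
      hence Bn: "B n \<le> a n powr (-p)" using step.IH by auto
      define u where "u = \<beta> * a n powr p"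
      have u_eq: "\<kappa> * m n = u" using mk(1)[OF step.hyps(1)] unfolding u_def \<beta>_def by simp
      have u0: "0 \<le> u" unfolding u_def using \<beta> by simp
      have "\<kappa> * m n \<le> \<kappa> * 1" using m0[of n] \<kappa> by (intro mult_left_mono) auto
      hence u1: "u < 1" using u_eq \<kappa> by linarith
      have A: "a (Suc n) \<le> a n * (1 - u)" using step'[of n] u_eq by simp
      have "a n powr (-p) * (1 + p * u) \<le> a n powr (-p) * (1 - u) powr (-p)"
        using bern_powr[OF u0 u1 p] by (intro mult_left_mono) auto
      also have "\<dots> = (a n * (1 - u)) powr (-p)" using posn u1 by (simp add: powr_mult)
      also have "\<dots> \<le> a (Suc n) powr (-p)"
        using A pos1 p by (intro powr_mono2') auto
      finally have C: "a n powr (-p) * (1 + p * u) \<le> a (Suc n) powr (-p)" .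
      have "a n powr (-p) * (1 + p * u) = a n powr (-p) + p * \<beta> * (a n powr (-p) * a n powr p)"
        unfolding u_def by (simp add: algebra_simps)
      also have "a n powr (-p) * a n powr p = 1" using posn by (simp add: powr_add[symmetric])
      finally have D: "a n powr (-p) + p * \<beta> \<le> a (Suc n) powr (-p)" using C by simp
      have "B (Suc n) = B n + p * \<beta>" unfolding B_def using step.hyps(1)
        by (simp add: Suc_diff_le algebra_simps)
      thus ?thesis using D Bn pos1 by simp
    qed
  qed
  have part2: "a k \<le> (a k0 powr (-e/(q-1)) + e*\<kappa>/(q-1) * K powr (1/(q-1)) * real(k-k0))
                    powr (-(q-1)/e)" if "k0 \<le> k" for k
  proof -
    have eq: "a k0 powr (-e/(q-1)) + e*\<kappa>/(q-1) * K powr (1/(q-1)) * real(k-k0) = B k"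
      unfolding B_def coef p_def by simp
    have ex: "-(q-1)/e = - (1/p)" unfolding p_def using e q by (simp add: field_simps)
    show ?thesis
    proof (cases "a k = 0")
      case True then show ?thesis by simp
    next
      case False
      hence pos: "a k > 0" and Bk: "B k \<le> a k powr (-p)" using inv[OF that] by auto
      have "a k0 > 0" using pos decj[OF that] by simp
      hence "B k > 0" unfolding B_def using p \<beta> by (intro add_pos_nonneg) auto
      have "a k = (a k powr (-p)) powr (- (1/p))" using pos p by (simp add: powr_powr)
      also have "\<dots> \<le> B k powr (- (1/p))"
        using \<open>B k > 0\<close> Bk p by (intro powr_mono2') auto
      finally show ?thesis unfolding eq ex .
    qed
  qed
  show ?thesis using ex part1 part2 unfolding k0_def[symmetric] Let_def by blast
qed



lemma cpc_not_minf: "closed_proper_convex h \<Longrightarrow> h y \<noteq> -\<infinity>"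
  by (simp add: closed_proper_convex_def proper_fun_def)

lemma cpc_conv:
  assumes h: "closed_proper_convex h" and hu: "\<bar>h u\<bar> \<noteq> \<infinity>" and hv: "\<bar>h v\<bar> \<noteq> \<infinity>"
    and t: "0 \<le> t" "t \<le> 1"
  shows "\<bar>h ((1-t) *\<^sub>R u + t *\<^sub>R v)\<bar> \<noteq> \<infinity> \<and>
    real_of_ereal (h ((1-t) *\<^sub>R u + t *\<^sub>R v)) \<le> (1-t) * real_of_ereal (h u) + t * real_of_ereal (h v)"
proof -
  define a where "a = real_of_ereal (h u)"
  define b where "b = real_of_ereal (h v)"
  have "(u, a) \<in> eepi h" using hu unfolding eepi_def a_def by (simp add: ereal_real')
  moreover have "(v, b) \<in> eepi h" using hv unfolding eepi_def b_def by (simp add: ereal_real')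
  moreover have "convex (eepi h)" using h by (simp add: closed_proper_convex_def)
  ultimately have "(1-t) *\<^sub>R (u, a) + t *\<^sub>R (v, b) \<in> eepi h"
    using t by (intro convexD) auto
  hence le: "h ((1-t) *\<^sub>R u + t *\<^sub>R v) \<le> ereal ((1-t) * a + t * b)" by (simp add: eepi_def)
  have nm: "h ((1-t) *\<^sub>R u + t *\<^sub>R v) \<noteq> -\<infinity>" using cpc_not_minf[OF h] .
  show ?thesis using le nm unfolding a_def[symmetric] b_def[symmetric]
    by (cases "h ((1-t) *\<^sub>R u + t *\<^sub>R v)") auto
qed

locale cgs =
  fixes f \<Psi> :: "'a::euclidean_space \<Rightarrow> ereal" and gf :: "'a \<Rightarrow> 'a"
  assumes f_cpc: "closed_proper_convex f" and \<Psi>_cpc: "closed_proper_convex \<Psi>"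
    and A1: "\<forall>y \<in> edom \<Psi>. has_grad f (gf y) y"
begin

lemma fin_\<Psi>: "y \<in> edom \<Psi> \<Longrightarrow> \<bar>\<Psi> y\<bar> \<noteq> \<infinity>"
  using cpc_not_minf[OF \<Psi>_cpc, of y] by (cases "\<Psi> y") (auto simp: edom_def)

lemma fin_f: "y \<in> edom \<Psi> \<Longrightarrow> \<bar>f y\<bar> \<noteq> \<infinity>"
proof -
  assume "y \<in> edom \<Psi>"
  hence "eventually (\<lambda>z. \<bar>f z\<bar> \<noteq> \<infinity>) (nhds y)" using A1 unfolding has_grad_def by auto
  thus ?thesis by (rule eventually_nhds_x_imp_x)
qed

lemma deriv_f: "y \<in> edom \<Psi> \<Longrightarrow> ((\<lambda>z. real_of_ereal (f z)) has_derivative (\<lambda>h. gf y \<bullet> h)) (at y)"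
  using A1 unfolding has_grad_def by auto

lemma edom_conv: "u \<in> edom \<Psi> \<Longrightarrow> v \<in> edom \<Psi> \<Longrightarrow> 0 \<le> t \<Longrightarrow> t \<le> 1 \<Longrightarrow>
   (1-t) *\<^sub>R u + t *\<^sub>R v \<in> edom \<Psi>"
  using cpc_conv[OF \<Psi>_cpc fin_\<Psi> fin_\<Psi>, of u v t] by (auto simp: edom_def)

lemma grad_ineq:
  assumes x: "x \<in> edom \<Psi>" and y: "f y \<noteq> \<infinity>"
  shows "real_of_ereal (f x) + gf x \<bullet> (y - x) \<le> real_of_ereal (f y)"
proof -
  have fy: "\<bar>f y\<bar> \<noteq> \<infinity>" using y cpc_not_minf[OF f_cpc, of y] by auto
  have fx: "\<bar>f x\<bar> \<noteq> \<infinity>" using fin_f[OF x] .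
  define \<phi> where "\<phi> t = real_of_ereal (f (x + t *\<^sub>R (y - x)))" for t
  have conv: "\<phi> t \<le> (1-t) * \<phi> 0 + t * \<phi> 1" if "0 \<le> t" "t \<le> 1" for t
  proof -
    have "x + t *\<^sub>R (y - x) = (1-t) *\<^sub>R x + t *\<^sub>R y" by (simp add: algebra_simps)
    thus ?thesis using cpc_conv[OF f_cpc fx fy that] unfolding \<phi>_def by simp
  qed
  define \<delta> where "\<delta> = gf x \<bullet> (y - x)"
  have "((\<lambda>t. x + t *\<^sub>R (y - x)) has_derivative (\<lambda>t. t *\<^sub>R (y - x))) (at 0)"
    by (auto intro!: derivative_eq_intros)
  hence "(\<phi> has_derivative (\<lambda>t. gf x \<bullet> (t *\<^sub>R (y - x)))) (at 0)"
    unfolding \<phi>_def using deriv_f[OF x]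
    by (intro has_derivative_compose[of "\<lambda>t. x + t *\<^sub>R (y - x)", where g="\<lambda>z. real_of_ereal (f z)", simplified]) auto
  hence "(\<phi> has_real_derivative \<delta>) (at 0)"
    unfolding \<delta>_def has_field_derivative_def by (simp add: mult.commute[of _ "gf x \<bullet> (y - x)"])
  hence "((\<lambda>t. (\<phi> t - \<phi> 0) / (t - 0)) \<longlongrightarrow> \<delta>) (at 0)"
    using has_field_derivative_iff by blast
  hence lim: "((\<lambda>t. (\<phi> t - \<phi> 0) / (t - 0)) \<longlongrightarrow> \<delta>) (at_right 0)"
    by (rule filterlim_mono) (simp_all add: at_le)
  have ev0: "(\<phi> t - \<phi> 0) / (t - 0) \<le> \<phi> 1 - \<phi> 0" if t: "0 < t" "t < 1" for t
  proof -
    have "\<phi> t - \<phi> 0 \<le> t * (\<phi> 1 - \<phi> 0)" using conv[of t] t by (simp add: algebra_simps)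
    thus ?thesis using t by (simp add: divide_le_eq mult.commute)
  qed
  have ev: "eventually (\<lambda>t. (\<phi> t - \<phi> 0) / (t - 0) \<le> \<phi> 1 - \<phi> 0) (at_right 0)"
    unfolding eventually_at_right_field using ev0 by (intro exI[of _ 1]) auto
  have "\<delta> \<le> \<phi> 1 - \<phi> 0"
    by (rule tendsto_upperbound[OF lim ev]) simp
  thus ?thesis unfolding \<delta>_def \<phi>_def by simp
qed


lemma conj_f:
  assumes x: "x \<in> edom \<Psi>"
  shows "conj_fun f (gf x) = ereal (gf x \<bullet> x - real_of_ereal (f x))"
proof (rule antisym)
  have fx: "f x = ereal (real_of_ereal (f x))" using fin_f[OF x] by (simp add: ereal_real')
  show "conj_fun f (gf x) \<le> ereal (gf x \<bullet> x - real_of_ereal (f x))"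
    unfolding conj_fun_def
  proof (rule SUP_least)
    fix y
    show "ereal (gf x \<bullet> y) - f y \<le> ereal (gf x \<bullet> x - real_of_ereal (f x))"
    proof (cases "f y = \<infinity>")
      case True then show ?thesis by simp
    next
      case False
      have fy: "f y = ereal (real_of_ereal (f y))"
        using False cpc_not_minf[OF f_cpc, of y] by (cases "f y") auto
      have "real_of_ereal (f x) + gf x \<bullet> (y - x) \<le> real_of_ereal (f y)"
        using grad_ineq[OF x False] .
      thus ?thesis by (subst fy) (simp add: inner_diff_right)
    qed
  qed
  show "ereal (gf x \<bullet> x - real_of_ereal (f x)) \<le> conj_fun f (gf x)"
    unfolding conj_fun_def
  proof (rule SUP_upper2[where i=x])
    show "ereal (gf x \<bullet> x - real_of_ereal (f x)) \<le> ereal (gf x \<bullet> x) - f x"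
      using fin_f[OF x] by (cases "f x") auto
  qed simp
qed

lemma conj_\<Psi>:
  assumes s: "is_lin_argmin \<Psi> g s"
  shows "s \<in> edom \<Psi> \<and> conj_fun \<Psi> (- g) = ereal (- (g \<bullet> s) - real_of_ereal (\<Psi> s))"
proof -
  obtain z where z: "\<Psi> z < \<infinity>" using \<Psi>_cpc unfolding closed_proper_convex_def proper_fun_def by auto
  have "ereal (g \<bullet> s) + \<Psi> s \<le> ereal (g \<bullet> z) + \<Psi> z" using s unfolding is_lin_argmin_def by auto
  also have "\<dots> < \<infinity>" using z by simp
  finally have "\<Psi> s \<noteq> \<infinity>" by auto
  hence sd: "s \<in> edom \<Psi>" by (cases "\<Psi> s") (auto simp: edom_def)
  have ps: "\<Psi> s = ereal (real_of_ereal (\<Psi> s))" using fin_\<Psi>[OF sd] by (simp add: ereal_real')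
  have "conj_fun \<Psi> (- g) = ereal (- (g \<bullet> s) - real_of_ereal (\<Psi> s))"
  proof (rule antisym)
    show "conj_fun \<Psi> (- g) \<le> ereal (- (g \<bullet> s) - real_of_ereal (\<Psi> s))"
      unfolding conj_fun_def
    proof (rule SUP_least)
      fix y
      show "ereal (- g \<bullet> y) - \<Psi> y \<le> ereal (- (g \<bullet> s) - real_of_ereal (\<Psi> s))"
      proof (cases "\<Psi> y = \<infinity>")
        case True then show ?thesis by simp
      next
        case False
        have py: "\<Psi> y = ereal (real_of_ereal (\<Psi> y))"
          using False cpc_not_minf[OF \<Psi>_cpc, of y] by (cases "\<Psi> y") auto
        have "ereal (g \<bullet> s) + \<Psi> s \<le> ereal (g \<bullet> y) + \<Psi> y" using s unfolding is_lin_argmin_def by auto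
        hence "g \<bullet> s + real_of_ereal (\<Psi> s) \<le> g \<bullet> y + real_of_ereal (\<Psi> y)"
          by (subst (asm) ps, subst (asm) py) simp
        thus ?thesis by (subst py) simp
      qed
    qed
    show "ereal (- (g \<bullet> s) - real_of_ereal (\<Psi> s)) \<le> conj_fun \<Psi> (- g)"
      unfolding conj_fun_def
    proof (rule SUP_upper2[where i=s])
      show "ereal (- (g \<bullet> s) - real_of_ereal (\<Psi> s)) \<le> ereal (- g \<bullet> s) - \<Psi> s"
        using fin_\<Psi>[OF sd] by (cases "\<Psi> s") auto
    qed simp
  qed
  thus ?thesis using sd by simp
qed

lemma gap_eq:
  assumes x: "x \<in> edom \<Psi>" and s: "is_lin_argmin \<Psi> (gf x) s"
  shows "gap f \<Psi> x (gf x) = ereal (real_of_ereal (\<Psi> x) - real_of_ereal (\<Psi> s) + gf x \<bullet> (x - s))"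
proof -
  have fx: "f x = ereal (real_of_ereal (f x))" using fin_f[OF x] by (simp add: ereal_real')
  have px: "\<Psi> x = ereal (real_of_ereal (\<Psi> x))" using fin_\<Psi>[OF x] by (simp add: ereal_real')
  show ?thesis unfolding gap_def conj_f[OF x] conj_\<Psi>[OF s, THEN conjunct2]
    by (subst fx, subst px) (simp add: inner_diff_right)
qed

lemma subdiff_mem:
  assumes s: "is_lin_argmin \<Psi> g s"
  shows "s \<in> subdiff (conj_fun \<Psi>) (- g)"
proof -
  have sd: "s \<in> edom \<Psi>" and cj: "conj_fun \<Psi> (- g) = ereal (- (g \<bullet> s) - real_of_ereal (\<Psi> s))"
    using conj_\<Psi>[OF s] by auto
  have ps: "\<Psi> s = ereal (real_of_ereal (\<Psi> s))" using fin_\<Psi>[OF sd] by (simp add: ereal_real')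
  have "conj_fun \<Psi> (- g) + ereal (s \<bullet> (v - - g)) \<le> conj_fun \<Psi> v" for v
  proof -
    have "conj_fun \<Psi> (- g) + ereal (s \<bullet> (v - - g)) = ereal (v \<bullet> s) - \<Psi> s"
      unfolding cj by (subst ps) (simp add: inner_add_right inner_commute)
    also have "\<dots> \<le> conj_fun \<Psi> v" unfolding conj_fun_def by (rule SUP_upper) simp
    finally show ?thesis .
  qed
  thus ?thesis unfolding subdiff_def cj by simp
qed


lemma fin_obtain: "\<bar>h\<bar> \<noteq> \<infinity> \<Longrightarrow> \<exists>r. h = ereal r"
  by (cases h) auto

lemma sub_eq:
  assumes xs: "\<forall>y. f xs + \<Psi> xs \<le> f y + \<Psi> y" and y: "y \<in> edom \<Psi>"
  shows "xs \<in> edom \<Psi> \<and> subopt f \<Psi> y =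
     (real_of_ereal (f y) + real_of_ereal (\<Psi> y)) - (real_of_ereal (f xs) + real_of_ereal (\<Psi> xs))"
proof -
  obtain a b where ab: "f y = ereal a" "\<Psi> y = ereal b" using fin_obtain fin_f[OF y] fin_\<Psi>[OF y] by metis
  have le: "f xs + \<Psi> xs \<le> ereal (a + b)" using xs ab by (metis plus_ereal.simps(1))
  have n1: "f xs \<noteq> -\<infinity>" "\<Psi> xs \<noteq> -\<infinity>" using cpc_not_minf f_cpc \<Psi>_cpc by auto
  have "f xs \<noteq> \<infinity>" "\<Psi> xs \<noteq> \<infinity>" using le n1 by auto
  then obtain a' b' where ab': "f xs = ereal a'" "\<Psi> xs = ereal b'" using n1
    by (metis ereal_cases)
  have inf: "(INF z. f z + \<Psi> z) = f xs + \<Psi> xs"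
    by (rule antisym) (auto intro: INF_lower INF_greatest xs[rule_format])
  have "xs \<in> edom \<Psi>" using ab' by (simp add: edom_def)
  thus ?thesis unfolding subopt_def inf using ab ab' by simp
qed

lemma Dcal_eq:
  assumes x: "x \<in> edom \<Psi>" and s: "s \<in> edom \<Psi>" and z: "x + \<theta> *\<^sub>R (s - x) \<in> edom \<Psi>"
  shows "Dcal f \<Psi> gf x s \<theta> = ereal (real_of_ereal (f (x + \<theta> *\<^sub>R (s - x))) - real_of_ereal (f x)
     - gf x \<bullet> (\<theta> *\<^sub>R (s - x)) + real_of_ereal (\<Psi> (x + \<theta> *\<^sub>R (s - x)))
     - (1 - \<theta>) * real_of_ereal (\<Psi> x) - \<theta> * real_of_ereal (\<Psi> s))"
proof -
  obtain a b where ab: "f x = ereal a" "\<Psi> x = ereal b" using fin_obtain fin_f[OF x] fin_\<Psi>[OF x] by metis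
  obtain d where d: "\<Psi> s = ereal d" using fin_obtain fin_\<Psi>[OF s] by metis
  obtain a' b' where ab': "f (x + \<theta> *\<^sub>R (s - x)) = ereal a'" "\<Psi> (x + \<theta> *\<^sub>R (s - x)) = ereal b'"
    using fin_obtain fin_f[OF z] fin_\<Psi>[OF z] by metis
  show ?thesis unfolding Dcal_def bregman_def using ab d ab' by simp
qed


lemma step:
  assumes x: "x \<in> edom \<Psi>" and sarg: "is_lin_argmin \<Psi> (gf x) s"
    and xs: "\<forall>y. f xs + \<Psi> xs \<le> f y + \<Psi> y"
    and c: "0 < c" "c < 1" and \<rho>: "0 < \<rho>" "\<rho> < 1"
    and \<theta>01: "0 \<le> \<theta>" "\<theta> \<le> 1"
    and \<theta>lo: "\<rho> * theta_hat f \<Psi> gf c x s \<le> \<theta>" and \<theta>hi: "\<theta> \<le> theta_hat f \<Psi> gf c x s"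
    and q: "q > 1" and r: "0 \<le> r" "r \<le> 1" and growth: "weak_growth f \<Psi> gf q r M"
  shows "(1 - \<theta>) *\<^sub>R x + \<theta> *\<^sub>R s \<in> edom \<Psi> \<and> 0 \<le> subopt f \<Psi> x \<and>
    subopt f \<Psi> ((1 - \<theta>) *\<^sub>R x + \<theta> *\<^sub>R s) \<le> subopt f \<Psi> x *
      (1 - (c + \<rho> - 1) * min 1 ((q * (1 - c) / M * rpow (subopt f \<Psi> x) (1 - r)) powr (1 / (q - 1))))"
proof -
  define g where "g = gf x"
  have sd: "s \<in> edom \<Psi>" using conj_\<Psi>[OF sarg] by auto
  have xsd: "xs \<in> edom \<Psi>" using sub_eq[OF xs x] by auto
  obtain fx px where fpx: "f x = ereal fx" "\<Psi> x = ereal px" using fin_obtain fin_f[OF x] fin_\<Psi>[OF x] by metis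
  obtain ps where ps: "\<Psi> s = ereal ps" using fin_obtain fin_\<Psi>[OF sd] by metis
  obtain fxs pxs where fpxs: "f xs = ereal fxs" "\<Psi> xs = ereal pxs" using fin_obtain fin_f[OF xsd] fin_\<Psi>[OF xsd] by metis
  define Fr where "Fr y = real_of_ereal (f y) + real_of_ereal (\<Psi> y)" for y
  define z where "z t = x + t *\<^sub>R (s - x)" for t
  have zc: "z t = (1 - t) *\<^sub>R x + t *\<^sub>R s" for t unfolding z_def by (simp add: algebra_simps)
  have zd: "z t \<in> edom \<Psi>" if "0 \<le> t" "t \<le> 1" for t unfolding zc using edom_conv[OF x sd that] .
  define G where "G = px - ps + g \<bullet> (x - s)"
  have gapG: "gap f \<Psi> x (gf x) = ereal G"
    unfolding G_def g_def using gap_eq[OF x sarg] fpx ps by simp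
  define a where "a = subopt f \<Psi> x"
  have a_eq: "a = (fx + px) - (fxs + pxs)" unfolding a_def using sub_eq[OF xs x] fpx fpxs by simp
  have a0: "0 \<le> a" using xs[rule_format, of x] fpx fpxs a_eq by simp
  have gi: "fx + g \<bullet> (xs - x) \<le> fxs" using grad_ineq[OF x, of xs] fpx fpxs unfolding g_def by simp
  have am: "g \<bullet> s + ps \<le> g \<bullet> xs + pxs"
    using sarg[unfolded is_lin_argmin_def, rule_format, of xs] ps fpxs unfolding g_def by simp
  have Ga: "a \<le> G" using gi am unfolding a_eq G_def by (simp add: inner_diff_right)
  have G0: "0 \<le> G" using a0 Ga by simp
  define Dr where "Dr t = Fr (z t) - Fr x + t * G" for t
  have Dcal_r: "Dcal f \<Psi> gf x s t = ereal (Dr t)" if "0 \<le> t" "t \<le> 1" for t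
  proof -
    have "Dcal f \<Psi> gf x s t = ereal (real_of_ereal (f (z t)) - fx
     - g \<bullet> (t *\<^sub>R (s - x)) + real_of_ereal (\<Psi> (z t)) - (1 - t) * px - t * ps)"
      using Dcal_eq[OF x sd zd[OF that, unfolded z_def]] fpx ps unfolding z_def g_def by simp
    also have "\<dots> = ereal (Dr t)" unfolding Dr_def Fr_def G_def using fpx
      by (simp add: inner_diff_right algebra_simps)
    finally show ?thesis .
  qed
  have cond: "(ereal (1 - t) * gap f \<Psi> x (gf x) + Dcal f \<Psi> gf x s t \<le> ereal (1 - c * t) * gap f \<Psi> x (gf x))
     \<longleftrightarrow> Fr (z t) \<le> Fr x - c * t * G" if "0 \<le> t" "t \<le> 1" for t
  proof -
    have "(ereal (1 - t) * gap f \<Psi> x (gf x) + Dcal f \<Psi> gf x s t \<le> ereal (1 - c * t) * gap f \<Psi> x (gf x))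
       \<longleftrightarrow> (1 - t) * G + Dr t \<le> (1 - c * t) * G"
      unfolding gapG Dcal_r[OF that] by simp
    also have "\<dots> \<longleftrightarrow> Fr (z t) \<le> Fr x - c * t * G" unfolding Dr_def by (simp add: algebra_simps)
    finally show ?thesis .
  qed
  define S where "S = {t. t \<in> {0..1} \<and> Fr (z t) \<le> Fr x - c * t * G}"
  define h where "h t = (z t, Fr x - c * t * G - real_of_ereal (f (z t)))" for t
  have contf: "continuous_on {0..1} (\<lambda>t. real_of_ereal (f (z t)))"
  proof (rule continuous_at_imp_continuous_on, rule ballI)
    fix t :: real assume "t \<in> {0..1}"
    hence zt: "z t \<in> edom \<Psi>" using zd by auto
    have "isCont (\<lambda>y. real_of_ereal (f y)) (z t)"
      using deriv_f[OF zt] by (rule has_derivative_continuous)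
    moreover have "isCont z t" unfolding z_def by (intro continuous_intros)
    ultimately show "isCont (\<lambda>t. real_of_ereal (f (z t))) t" by (rule isCont_o2[rotated])
  qed
  have conth: "continuous_on {0..1} h" unfolding h_def
    by (intro continuous_intros contf) (simp_all add: z_def continuous_intros)
  have Seq: "S = {0..1} \<inter> h -` eepi \<Psi>"
  proof (rule set_eqI)
    fix t
    show "t \<in> S \<longleftrightarrow> t \<in> {0..1} \<inter> h -` eepi \<Psi>"
    proof (cases "t \<in> {0..1}")
      case True
      then obtain a' b' where ab': "f (z t) = ereal a'" "\<Psi> (z t) = ereal b'"
        using fin_obtain fin_f[OF zd] fin_\<Psi>[OF zd] by (metis atLeastAtMost_iff)
      show ?thesis using True ab' unfolding S_def h_def eepi_def Fr_def by auto
    next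
      case False then show ?thesis unfolding S_def by auto
    qed
  qed
  have "closed (eepi \<Psi>)" using \<Psi>_cpc by (simp add: closed_proper_convex_def)
  hence "closed S" unfolding Seq by (intro continuous_closed_preimage conth) auto
  moreover have "bounded S" by (rule bounded_subset[of "{0..1}"]) (auto simp: S_def)
  ultimately have "compact S" by (simp add: compact_eq_bounded_closed)
  moreover have S0: "0 \<in> S" unfolding S_def z_def by simp
  ultimately obtain th where thS: "th \<in> S" and thmax: "\<forall>t\<in>S. t \<le> th"
    using compact_attains_sup[of S] by blast
  have pred: "(\<lambda>t. t \<in> {0..1} \<and> ereal (1 - t) * gap f \<Psi> x (gf x) + Dcal f \<Psi> gf x s t
        \<le> ereal (1 - c * t) * gap f \<Psi> x (gf x)) = (\<lambda>t. t \<in> S)"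
    unfolding S_def using cond by (auto intro!: ext)
  have th_eq: "theta_hat f \<Psi> gf c x s = th"
    unfolding theta_hat_def pred using thS thmax by (intro Greatest_equality) auto
  have th01: "0 \<le> th" "th \<le> 1" using thS unfolding S_def by auto
  have convS: "t \<in> S" if t: "0 \<le> t" "t \<le> th" for t
  proof (cases "th = 0")
    case True then show ?thesis using t S0 by simp
  next
    case False
    hence thp: "th > 0" using th01 by simp
    define l where "l = t / th"
    have l: "0 \<le> l" "l \<le> 1" using t thp unfolding l_def by auto
    have lth: "l * th = t" unfolding l_def using thp by simp
    have zeq: "z t = (1 - l) *\<^sub>R x + l *\<^sub>R z th"
    proof -
      have "(1 - l) *\<^sub>R x + l *\<^sub>R z th = x + (l * th) *\<^sub>R (s - x)"
        unfolding z_def by (simp add: algebra_simps)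
      thus ?thesis unfolding lth z_def by simp
    qed
    have zth: "z th \<in> edom \<Psi>" using zd th01 by auto
    have c1: "real_of_ereal (f (z t)) \<le> (1 - l) * real_of_ereal (f x) + l * real_of_ereal (f (z th))"
      using cpc_conv[OF f_cpc fin_f[OF x] fin_f[OF zth] l] unfolding zeq by simp
    have c2: "real_of_ereal (\<Psi> (z t)) \<le> (1 - l) * real_of_ereal (\<Psi> x) + l * real_of_ereal (\<Psi> (z th))"
      using cpc_conv[OF \<Psi>_cpc fin_\<Psi>[OF x] fin_\<Psi>[OF zth] l] unfolding zeq by simp
    have "Fr (z t) \<le> (1 - l) * Fr x + l * Fr (z th)" using c1 c2 unfolding Fr_def by (simp add: algebra_simps)
    also have "\<dots> \<le> (1 - l) * Fr x + l * (Fr x - c * th * G)"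
      using thS l unfolding S_def by (intro add_left_mono mult_left_mono) auto
    also have "\<dots> = Fr x - c * (l * th) * G" by (simp add: algebra_simps)
    finally show ?thesis unfolding S_def lth using t th01 by auto
  qed
  have \<theta>S: "\<theta> \<in> S" using convS \<theta>01 \<theta>hi th_eq by auto
  define rp where "rp = rpow a (1 - r)"
  have rp0: "0 \<le> rp" unfolding rp_def rpow_def by simp
  define T where "T = (q * (1 - c) / M * rp) powr (1 / (q - 1))"
  define m where "m = min 1 T"
  have M: "M > 0" using growth by (simp add: weak_growth_def)
  have T0: "0 \<le> T" unfolding T_def by simp
  have m01: "0 \<le> m" "m \<le> 1" "m \<le> T" unfolding m_def using T0 by auto
  have mS: "m \<in> S"
  proof (cases "rp = 0 \<or> m = 0")
    case True
    hence "m = 0" unfolding m_def T_def by auto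
    then show ?thesis using S0 by simp
  next
    case False
    hence rpp: "rp > 0" and mp: "m > 0" using rp0 m01 by auto
    have sub: "s \<in> subdiff (conj_fun \<Psi>) (- gf x)" by (rule subdiff_mem[OF sarg])
    have "Dcal f \<Psi> gf x s m * ereal (rpow (subopt f \<Psi> x) (1 - r))
          \<le> ereal (M * m powr q / q) * gap f \<Psi> x (gf x)"
      using growth x sub m01 unfolding weak_growth_def by auto
    hence D1: "Dr m * rp \<le> M * m powr q / q * G"
      unfolding Dcal_r[OF m01(1,2)] gapG rp_def a_def by simp
    define t where "t = q * (1 - c) / M * rp"
    have tp: "t > 0" unfolding t_def using rpp M c q by simp
    have "m powr (q - 1) \<le> T powr (q - 1)" using m01 q by (intro powr_mono2) auto
    also have "T powr (q - 1) = t" unfolding T_def t_def[symmetric] using tp q by (simp add: powr_powr)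
    finally have mt: "m powr (q - 1) \<le> t" .
    have "m powr q = m * m powr (q - 1)" using powr_add[of m 1 "q - 1"] mp by simp
    hence "M * m powr q / q * G = M / q * G * m * m powr (q - 1)" by (simp add: algebra_simps)
    also have "\<dots> \<le> M / q * G * m * t"
      using mt M q G0 mp by (intro mult_left_mono) auto
    also have "\<dots> = (1 - c) * m * G * rp" unfolding t_def using M q by (simp add: field_simps)
    finally have "Dr m * rp \<le> ((1 - c) * m * G) * rp" using D1 by simp
    hence "Dr m \<le> (1 - c) * m * G" using rpp by simp
    thus ?thesis unfolding S_def Dr_def using m01 by (simp add: algebra_simps)
  qed
  have mth: "m \<le> th" using thmax mS by auto
  have new: "(1 - \<theta>) *\<^sub>R x + \<theta> *\<^sub>R s = z \<theta>" unfolding zc ..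
  have newd: "z \<theta> \<in> edom \<Psi>" using zd \<theta>01 by auto
  obtain fz pz where fpz: "f (z \<theta>) = ereal fz" "\<Psi> (z \<theta>) = ereal pz"
    using fin_obtain fin_f[OF newd] fin_\<Psi>[OF newd] by metis
  have sz: "subopt f \<Psi> (z \<theta>) = Fr (z \<theta>) - (fxs + pxs)"
    using sub_eq[OF xs newd] fpz fpxs unfolding Fr_def by simp
  have Frx: "Fr x = fx + px" unfolding Fr_def using fpx by simp
  have "subopt f \<Psi> (z \<theta>) \<le> a - c * \<theta> * G" using \<theta>S sz a_eq Frx unfolding S_def by simp
  also have "c * \<theta> * G \<ge> c * \<theta> * a" using Ga c \<theta>01 by (intro mult_left_mono) auto
  hence "a - c * \<theta> * G \<le> a - c * \<theta> * a" by simp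
  also have "c * \<theta> * a \<ge> c * (\<rho> * th) * a" using \<theta>lo th_eq c a0
    by (intro mult_right_mono mult_left_mono) auto
  hence "a - c * \<theta> * a \<le> a - c * (\<rho> * th) * a" by simp
  also have "c * (\<rho> * th) * a \<ge> c * (\<rho> * m) * a" using mth c \<rho> a0
    by (intro mult_right_mono mult_left_mono) auto
  hence "a - c * (\<rho> * th) * a \<le> a - c * (\<rho> * m) * a" by simp
  also have "(c + \<rho> - 1) * m * a \<le> c * \<rho> * m * a"
  proof -
    have "c + \<rho> - 1 \<le> c * \<rho>" using c \<rho> mult_left_mono[of \<rho> 1 "1 - c"] by (simp add: algebra_simps)
    thus ?thesis using m01 a0 by (intro mult_right_mono) auto
  qed
  hence "a - c * (\<rho> * m) * a \<le> a * (1 - (c + \<rho> - 1) * m)" by (simp add: algebra_simps)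
  finally have fin: "subopt f \<Psi> (z \<theta>) \<le> a * (1 - (c + \<rho> - 1) * m)" .
  show ?thesis unfolding new using newd a0 fin unfolding a_def m_def T_def rp_def by simp
qed

end

theorem theorem4:
  fixes f \<Psi> :: "'a::euclidean_space \<Rightarrow> ereal"
    and gf :: "'a \<Rightarrow> 'a"
    and x s :: "nat \<Rightarrow> 'a"
    and \<theta> :: "nat \<Rightarrow> real"
    and c \<rho> q r M :: real
  assumes f_cpc: "closed_proper_convex f"
    and \<Psi>_cpc: "closed_proper_convex \<Psi>"
    and A1: "\<forall>y \<in> edom \<Psi>. has_grad f (gf y) y"
    and A2: "\<forall>y \<in> edom f. \<forall>g. has_grad f g y \<longrightarrow> (\<exists>z. is_lin_argmin \<Psi> g z)"
    and min_attained: "\<exists>xs. \<forall>y. f xs + \<Psi> xs \<le> f y + \<Psi> y"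
    and c: "0 < c" "c < 1" and \<rho>: "0 < \<rho>" "\<rho> < 1" and c\<rho>: "c + \<rho> > 1"
    and x0: "x 0 \<in> edom \<Psi>"
    and s_def: "\<forall>k. is_lin_argmin \<Psi> (gf (x k)) (s k)"
    and \<theta>_range: "\<forall>k. \<theta> k \<in> {0..1}"
    and \<theta>_step: "\<forall>k. \<rho> * theta_hat f \<Psi> gf c (x k) (s k) \<le> \<theta> k
                    \<and> \<theta> k \<le> theta_hat f \<Psi> gf c (x k) (s k)"
    and x_next: "\<forall>k. x (Suc k) = (1 - \<theta> k) *\<^sub>R x k + \<theta> k *\<^sub>R s k"
    and q: "q > 1" and r: "0 \<le> r" "r \<le> 1"
    and growth: "weak_growth f \<Psi> gf q r M"
  shows "(\<forall>k. subopt f \<Psi> (x (Suc k)) \<le> subopt f \<Psi> (x k) *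
            (1 - (c + \<rho> - 1) * min 1 ((q * (1 - c) / M * rpow (subopt f \<Psi> (x k)) (1 - r))
                                         powr (1 / (q - 1)))))
       \<and> (r = 1 \<longrightarrow> (\<forall>k. subopt f \<Psi> (x k) \<le> subopt f \<Psi> (x 0) *
            (1 - (c + \<rho> - 1) * min 1 ((q * (1 - c) / M) powr (1 / (q - 1)))) ^ k))
       \<and> (r < 1 \<longrightarrow>
            (\<exists>k. subopt f \<Psi> (x k) powr (1 - r) \<le> M / (q * (1 - c))) \<and>
            (let k0 = (LEAST k. subopt f \<Psi> (x k) powr (1 - r) \<le> M / (q * (1 - c))) in
              (\<forall>k \<le> k0. subopt f \<Psi> (x k) \<le> subopt f \<Psi> (x 0) * (1 - (c + \<rho> - 1)) ^ k) \<and>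
              (\<forall>k \<ge> k0. subopt f \<Psi> (x k) \<le>
                 (subopt f \<Psi> (x k0) powr ((r - 1) / (q - 1))
                  + (1 - r) * (c + \<rho> - 1) / (q - 1) * (q * (1 - c) / M) powr (1 / (q - 1))
                    * real (k - k0)) powr ((q - 1) / (r - 1)))))"
  proof -
  interpret cgs f \<Psi> gf using f_cpc \<Psi>_cpc A1 by unfold_locales
  obtain xs where xs: "\<forall>y. f xs + \<Psi> xs \<le> f y + \<Psi> y" using min_attained by blast
  have M: "M > 0" using growth by (simp add: weak_growth_def)
  define a where "a k = subopt f \<Psi> (x k)" for k
  define mm where "mm k = min 1 ((q * (1 - c) / M * rpow (a k) (1 - r)) powr (1 / (q - 1)))" for k
  have stp: "\<And>k. x k \<in> edom \<Psi> \<Longrightarrow> x (Suc k) \<in> edom \<Psi> \<and> 0 \<le> a k \<and>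
      a (Suc k) \<le> a k * (1 - (c + \<rho> - 1) * mm k)"
  proof -
    fix k assume xk: "x k \<in> edom \<Psi>"
    show "x (Suc k) \<in> edom \<Psi> \<and> 0 \<le> a k \<and> a (Suc k) \<le> a k * (1 - (c + \<rho> - 1) * mm k)"
      using step[OF xk s_def[rule_format, of k] xs c \<rho> _ _ _ _ q r growth, of "\<theta> k"]
        \<theta>_range \<theta>_step x_next unfolding a_def mm_def by auto
  qed
  have xd: "x k \<in> edom \<Psi>" for k
    by (induction k) (use x0 stp in auto)
  have st: "a (Suc k) \<le> a k * (1 - (c + \<rho> - 1) * mm k)" and a0: "0 \<le> a k" for k
    using stp[OF xd[of k]] by auto
  have P1: "\<forall>k. subopt f \<Psi> (x (Suc k)) \<le> subopt f \<Psi> (x k) *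
            (1 - (c + \<rho> - 1) * min 1 ((q * (1 - c) / M * rpow (subopt f \<Psi> (x k)) (1 - r))
                                         powr (1 / (q - 1))))"
    using st unfolding a_def mm_def by auto
  have P2: "r = 1 \<longrightarrow> (\<forall>k. subopt f \<Psi> (x k) \<le> subopt f \<Psi> (x 0) *
            (1 - (c + \<rho> - 1) * min 1 ((q * (1 - c) / M) powr (1 / (q - 1)))) ^ k)"
  proof (intro impI allI)
    fix k assume r1: "r = 1"
    define \<beta> where "\<beta> = 1 - (c + \<rho> - 1) * min 1 ((q * (1 - c) / M) powr (1 / (q - 1)))"
    have mmk: "mm k = min 1 ((q * (1 - c) / M) powr (1 / (q - 1)))" for k
      unfolding mm_def r1 rpow_def by simp
    have "(c + \<rho> - 1) * min 1 ((q * (1 - c) / M) powr (1 / (q - 1))) \<le> (c + \<rho> - 1) * 1"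
      using c\<rho> by (intro mult_left_mono) auto
    hence \<beta>0: "0 \<le> \<beta>" unfolding \<beta>_def using c \<rho> by simp
    have "a k \<le> a 0 * \<beta> ^ k"
    proof (induction k)
      case 0 then show ?case by simp
    next
      case (Suc k)
      have "a (Suc k) \<le> a k * \<beta>" using st[of k] unfolding mmk \<beta>_def .
      also have "\<dots> \<le> a 0 * \<beta> ^ k * \<beta>" using Suc \<beta>0 by (intro mult_right_mono) auto
      finally show ?case by (simp add: mult_ac)
    qed
    thus "subopt f \<Psi> (x k) \<le> subopt f \<Psi> (x 0) * (1 - (c + \<rho> - 1) * min 1 ((q * (1 - c) / M) powr (1 / (q - 1)))) ^ k"
      unfolding a_def \<beta>_def .
  qed
  have P3: "r < 1 \<longrightarrow>
            (\<exists>k. subopt f \<Psi> (x k) powr (1 - r) \<le> M / (q * (1 - c))) \<and>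
            (let k0 = (LEAST k. subopt f \<Psi> (x k) powr (1 - r) \<le> M / (q * (1 - c))) in
              (\<forall>k \<le> k0. subopt f \<Psi> (x k) \<le> subopt f \<Psi> (x 0) * (1 - (c + \<rho> - 1)) ^ k) \<and>
              (\<forall>k \<ge> k0. subopt f \<Psi> (x k) \<le>
                 (subopt f \<Psi> (x k0) powr ((r - 1) / (q - 1))
                  + (1 - r) * (c + \<rho> - 1) / (q - 1) * (q * (1 - c) / M) powr (1 / (q - 1))
                    * real (k - k0)) powr ((q - 1) / (r - 1))))"
  proof
    assume r1: "r < 1"
    have stp': "\<forall>k. a (Suc k) \<le> a k * (1 - (c + \<rho> - 1) * min 1 ((q * (1 - c) / M * a k powr (1 - r)) powr (1/(q-1))))"
      using st r1 unfolding mm_def rpow_def by auto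
    have K: "q * (1 - c) / M > 0" using q c M by simp
    have H: "(\<exists>k. a k powr (1 - r) \<le> 1 / (q * (1 - c) / M)) \<and>
      (let k0 = (LEAST k. a k powr (1 - r) \<le> 1 / (q * (1 - c) / M)) in
      (\<forall>k\<le>k0. a k \<le> a 0 * (1 - (c + \<rho> - 1))^k) \<and>
      (\<forall>k\<ge>k0. a k \<le> (a k0 powr (-(1 - r)/(q-1)) + (1 - r)*(c + \<rho> - 1)/(q-1) * (q * (1 - c) / M) powr (1/(q-1)) * real(k-k0))
                    powr (-(q-1)/(1 - r))))"
      by (rule seq_part3[OF allI[OF a0] _ _ K _ _ q stp']) (use c \<rho> c\<rho> r r1 in auto)
    have e1: "1 / (q * (1 - c) / M) = M / (q * (1 - c))" by simp
    have e2: "-(1 - r)/(q-1) = (r - 1) / (q - 1)" by (simp add: field_simps)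
    have e3: "-(q-1)/(1 - r) = (q - 1) / (r - 1)" using r1 by (simp add: field_simps)
    show "(\<exists>k. subopt f \<Psi> (x k) powr (1 - r) \<le> M / (q * (1 - c))) \<and>
            (let k0 = (LEAST k. subopt f \<Psi> (x k) powr (1 - r) \<le> M / (q * (1 - c))) in
              (\<forall>k \<le> k0. subopt f \<Psi> (x k) \<le> subopt f \<Psi> (x 0) * (1 - (c + \<rho> - 1)) ^ k) \<and>
              (\<forall>k \<ge> k0. subopt f \<Psi> (x k) \<le>
                 (subopt f \<Psi> (x k0) powr ((r - 1) / (q - 1))
                  + (1 - r) * (c + \<rho> - 1) / (q - 1) * (q * (1 - c) / M) powr (1 / (q - 1))
                    * real (k - k0)) powr ((q - 1) / (r - 1))))"
      using H unfolding e1 e2 e3 a_def .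
  qed
  show ?thesis using P1 P2 P3 by blast
qed

end
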